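(* Let $\mathcal{G}$ be a finite-dimensional solvable Lie algebra with basis $\{X_i\}$ and structure constants $[X_i,X_j]=C_{ij}^k X_k$, and let $S=\{\lambda_\alpha\}$ be a finite abelian semigroup with 2-selector $K_{\alpha\beta}^{\gamma}$. Then the $S$-expanded algebra $\mathcal{G}_S=S\otimes\mathcal{G}$ is solvable.
   Context: For a finite abelian semigroup $S=\{\lambda_\alpha\}$, the 2-selector is defined by $K_{\alpha\beta}^{\gamma}=1$ if $\lambda_\alpha\lambda_\beta=\lambda_\gamma$ and $0$ otherwise. The $S$-expanded algebra $\mathcal{G}_S=S\otimes\mathcal{G}$ is the vector space with basis $X_{(i,\alpha)}=\lambda_\alpha\otimes X_i$ and Lie bracket $[X_{(i,\alpha)},X_{(j,\beta)}]=K_{\alpha\beta}^{\gamma}C_{ij}^k X_{(k,\gamma)}$ (this is a Lie algebra). A Lie algebra $\mathcal{L}$ is solvable if the derived series $\mathcal{L}^{(0)}=\mathcal{L}$, $\mathcal{L}^{(n)}=[\mathcal{L}^{(n-1)},\mathcal{L}^{(n-1)}]$ reaches $0$. *)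

theory Defs
  imports Main
begin

text \<open>A finite-dimensional Lie algebra over a field 'k is given by a finite basis
 (indexed by the finite type 'i) and structure constants C i j k, i.e.
 [X_i, X_j] = sum_k C i j k X_k.  Elements are coordinate vectors 'i => 'k.\<close>

definition is_lie_algebra :: "('i::finite \<Rightarrow> 'i \<Rightarrow> 'i \<Rightarrow> 'k::field) \<Rightarrow> bool" where
  "is_lie_algebra C \<longleftrightarrow>
     (\<forall>i k. C i i k = 0) \<and>
     (\<forall>i j k. C i j k = - C j i k) \<and>
     (\<forall>i j l m. (\<Sum>k\<in>UNIV. C j l k * C i k m + C l i k * C j k m + C i j k * C l k m) = 0)"

definition lin_span :: "('i \<Rightarrow> 'k::field) set \<Rightarrow> ('i \<Rightarrow> 'k) set" where
  "lin_span B = {(\<lambda>k. \<Sum>a\<in>t. r a * a k) | t r. finite t \<and> t \<subseteq> B}"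

definition lie_bracket :: "('i::finite \<Rightarrow> 'i \<Rightarrow> 'i \<Rightarrow> 'k::field) \<Rightarrow> ('i \<Rightarrow> 'k) \<Rightarrow> ('i \<Rightarrow> 'k) \<Rightarrow> ('i \<Rightarrow> 'k)" where
  "lie_bracket C x y = (\<lambda>k. \<Sum>i\<in>UNIV. \<Sum>j\<in>UNIV. x i * y j * C i j k)"

fun derived_series :: "('i::finite \<Rightarrow> 'i \<Rightarrow> 'i \<Rightarrow> 'k::field) \<Rightarrow> nat \<Rightarrow> ('i \<Rightarrow> 'k) set" where
  "derived_series C 0 = UNIV"
| "derived_series C (Suc n) =
     lin_span {lie_bracket C x y | x y. x \<in> derived_series C n \<and> y \<in> derived_series C n}"

definition solvable_lie :: "('i::finite \<Rightarrow> 'i \<Rightarrow> 'i \<Rightarrow> 'k::field) \<Rightarrow> bool" where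
  "solvable_lie C \<longleftrightarrow> (\<exists>n. derived_series C n = {\<lambda>_. 0})"

definition selector :: "'s::ab_semigroup_mult \<Rightarrow> 's \<Rightarrow> 's \<Rightarrow> 'k::field" where
  "selector a b c = (if a * b = c then 1 else 0)"

text \<open>Structure constants of the S-expanded algebra, basis X_(i,alpha) = lambda_alpha (x) X_i.\<close>
definition expanded_consts ::
  "('i::finite \<Rightarrow> 'i \<Rightarrow> 'i \<Rightarrow> 'k::field) \<Rightarrow> ('i \<times> 's::{finite,ab_semigroup_mult}) \<Rightarrow> ('i \<times> 's) \<Rightarrow> ('i \<times> 's) \<Rightarrow> 'k" where
  "expanded_consts C p q r = selector (snd p) (snd q) (snd r) * C (fst p) (fst q) (fst r)"

end

theory Submission
  imports Defs
begin

definition subsp :: "('i \<Rightarrow> 'k::field) set \<Rightarrow> bool" where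
  "subsp S \<longleftrightarrow> (\<lambda>_. 0) \<in> S \<and> (\<forall>x\<in>S. \<forall>y\<in>S. (\<lambda>k. x k + y k) \<in> S) \<and> (\<forall>c. \<forall>x\<in>S. (\<lambda>k. c * x k) \<in> S)"

lemma subsp_sum:
  assumes "subsp S" "finite F" "\<And>b. b \<in> F \<Longrightarrow> v b \<in> S"
  shows "(\<lambda>k. \<Sum>b\<in>F. c b * v b k) \<in> S"
  using assms(2,3)
proof (induction F rule: finite_induct)
  case empty then show ?case using assms(1) by (simp add: subsp_def)
next
  case (insert b F)
  have "(\<lambda>k. c b * v b k) \<in> S" using insert assms(1) by (simp add: subsp_def)
  moreover have "(\<lambda>k. \<Sum>b\<in>F. c b * v b k) \<in> S" using insert by auto
  ultimately have "(\<lambda>k. c b * v b k + (\<Sum>b\<in>F. c b * v b k)) \<in> S"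
    using assms(1) unfolding subsp_def by fast
  then show ?case using insert by simp
qed

lemma lin_span_intro: "finite t \<Longrightarrow> t \<subseteq> B \<Longrightarrow> (\<lambda>k. \<Sum>a\<in>t. r a * a k) \<in> lin_span B"
  unfolding lin_span_def by blast

lemma sum_pair_UNIV0: "(\<Sum>p\<in>(UNIV \<times> UNIV::('a::finite \<times> 'b::finite) set). g p) = (\<Sum>i\<in>UNIV. \<Sum>a\<in>UNIV. g (i, a))"
  by (simp only: sum.cartesian_product case_prod_eta)

lemmas sum_pair_UNIV = sum_pair_UNIV0[unfolded UNIV_Times_UNIV]

lemma lin_span_subsp: "subsp (lin_span B)"
  unfolding subsp_def
proof (intro conjI ballI allI)
  show "(\<lambda>_. 0) \<in> lin_span B" unfolding lin_span_def
    by (rule CollectI, rule exI[of _ "{}"], auto)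
next
  fix x y assume "x \<in> lin_span B" "y \<in> lin_span B"
  then obtain t1 r1 t2 r2 where h: "finite t1" "t1 \<subseteq> B" "x = (\<lambda>k. \<Sum>a\<in>t1. r1 a * a k)"
    "finite t2" "t2 \<subseteq> B" "y = (\<lambda>k. \<Sum>a\<in>t2. r2 a * a k)"
    unfolding lin_span_def by blast
  define r where "r a = (if a \<in> t1 then r1 a else 0) + (if a \<in> t2 then r2 a else 0)" for a
  have "(\<lambda>k. x k + y k) = (\<lambda>k. \<Sum>a\<in>t1 \<union> t2. r a * a k)"
  proof
    fix k
    have "(\<Sum>a\<in>t1 \<union> t2. r a * a k) = (\<Sum>a\<in>t1 \<union> t2. (if a \<in> t1 then r1 a * a k else 0))
        + (\<Sum>a\<in>t1 \<union> t2. (if a \<in> t2 then r2 a * a k else 0))"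
      unfolding r_def sum.distrib[symmetric] by (rule sum.cong) (auto simp: distrib_right)
    also have "\<dots> = x k + y k"
      using h by (simp add: sum.If_cases Int_absorb1 Int_absorb2)
    finally show "x k + y k = (\<Sum>a\<in>t1 \<union> t2. r a * a k)" by simp
  qed
  then show "(\<lambda>k. x k + y k) \<in> lin_span B" using h lin_span_intro[of "t1 \<union> t2" B r] by simp
next
  fix c x assume "x \<in> lin_span B"
  then obtain t r where h: "finite t" "t \<subseteq> B" "x = (\<lambda>k. \<Sum>a\<in>t. r a * a k)"
    unfolding lin_span_def by blast
  have "(\<lambda>k. c * x k) = (\<lambda>k. \<Sum>a\<in>t. (c * r a) * a k)"
    using h by (simp add: sum_distrib_left mult.assoc)
  then show "(\<lambda>k. c * x k) \<in> lin_span B" using h lin_span_intro[of t B "\<lambda>a. c * r a"] by simp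
qed

lemma lin_span_sub: "b \<in> B \<Longrightarrow> b \<in> lin_span B"
  unfolding lin_span_def
  by (rule CollectI, rule exI[of _ "{b}"], rule exI[of _ "\<lambda>_. 1"], auto)

lemma derived_subsp: "subsp (derived_series C n)"
  by (cases n) (simp add: subsp_def, simp only: derived_series.simps lin_span_subsp)

lemma bracket_slice:
  fixes C :: "'i::finite \<Rightarrow> 'i \<Rightarrow> 'i \<Rightarrow> 'k::field"
    and x y :: "'i \<times> 's::{finite,ab_semigroup_mult} \<Rightarrow> 'k"
  shows "lie_bracket (expanded_consts C) x y (k, s) =
    (\<Sum>\<alpha>\<in>UNIV. \<Sum>\<beta>\<in>UNIV. selector \<alpha> \<beta> s *
        lie_bracket C (\<lambda>i. x (i, \<alpha>)) (\<lambda>j. y (j, \<beta>)) k)"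
proof -
  have "lie_bracket (expanded_consts C) x y (k, s) =
     (\<Sum>p\<in>UNIV \<times> UNIV. \<Sum>q\<in>UNIV \<times> UNIV. x p * y q * (selector (snd p) (snd q) s * C (fst p) (fst q) k))"
    by (simp add: lie_bracket_def expanded_consts_def)
  also have "\<dots> = (\<Sum>i\<in>UNIV. \<Sum>\<alpha>\<in>UNIV. \<Sum>j\<in>UNIV. \<Sum>\<beta>\<in>UNIV. x (i,\<alpha>) * y (j,\<beta>) * (selector \<alpha> \<beta> s * C i j k))"
    by (simp add: sum_pair_UNIV)
  also have "\<dots> = (\<Sum>\<alpha>\<in>UNIV. \<Sum>i\<in>UNIV. \<Sum>j\<in>UNIV. \<Sum>\<beta>\<in>UNIV. x (i,\<alpha>) * y (j,\<beta>) * (selector \<alpha> \<beta> s * C i j k))"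
    by (rule sum.swap)
  also have "\<dots> = (\<Sum>\<alpha>\<in>UNIV. \<Sum>i\<in>UNIV. \<Sum>\<beta>\<in>UNIV. \<Sum>j\<in>UNIV. x (i,\<alpha>) * y (j,\<beta>) * (selector \<alpha> \<beta> s * C i j k))"
    by (rule sum.cong[OF refl], rule sum.cong[OF refl], rule sum.swap)
  also have "\<dots> = (\<Sum>\<alpha>\<in>UNIV. \<Sum>\<beta>\<in>UNIV. \<Sum>i\<in>UNIV. \<Sum>j\<in>UNIV. x (i,\<alpha>) * y (j,\<beta>) * (selector \<alpha> \<beta> s * C i j k))"
    by (rule sum.cong[OF refl], rule sum.swap)
  also have "\<dots> = (\<Sum>\<alpha>\<in>UNIV. \<Sum>\<beta>\<in>UNIV. selector \<alpha> \<beta> s * lie_bracket C (\<lambda>i. x (i, \<alpha>)) (\<lambda>j. y (j, \<beta>)) k)"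
    by (simp add: lie_bracket_def sum_distrib_left mult_ac)
  finally show ?thesis .
qed

lemma main_incl:
  fixes C :: "'i::finite \<Rightarrow> 'i \<Rightarrow> 'i \<Rightarrow> 'k::field"
  shows "v \<in> derived_series (expanded_consts C :: ('i \<times> 's::{finite,ab_semigroup_mult}) \<Rightarrow> _) n
    \<Longrightarrow> (\<lambda>i. v (i, s)) \<in> derived_series C n"
proof (induction n arbitrary: v s)
  case 0 then show ?case by simp
next
  case (Suc n)
  let ?E = "expanded_consts C :: ('i \<times> 's) \<Rightarrow> _"
  from Suc.prems obtain t r where h: "finite t"
    "t \<subseteq> {lie_bracket ?E x y | x y. x \<in> derived_series ?E n \<and> y \<in> derived_series ?E n}"
    "v = (\<lambda>k. \<Sum>a\<in>t. r a * a k)"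
    using Suc.prems unfolding derived_series.simps lin_span_def by blast
  have sl: "(\<lambda>i. a (i, s)) \<in> derived_series C (Suc n)" if "a \<in> t" for a
  proof -
    from that h(2) obtain x y where xy: "a = lie_bracket ?E x y"
      "x \<in> derived_series ?E n" "y \<in> derived_series ?E n" by blast
    have br: "lie_bracket C (\<lambda>i. x (i, \<alpha>)) (\<lambda>j. y (j, \<beta>)) \<in> derived_series C (Suc n)" for \<alpha> \<beta>
      using Suc.IH[OF xy(2)] Suc.IH[OF xy(3)] by (simp only: derived_series.simps) (rule lin_span_sub, blast)
    have "(\<lambda>k. \<Sum>\<beta>\<in>UNIV. selector \<alpha> \<beta> s * lie_bracket C (\<lambda>i. x (i, \<alpha>)) (\<lambda>j. y (j, \<beta>)) k)
          \<in> derived_series C (Suc n)" for \<alpha>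
      by (rule subsp_sum[OF derived_subsp], simp, rule br)
    note inner = this
    have "(\<lambda>k. \<Sum>\<alpha>\<in>UNIV. 1 * (\<Sum>\<beta>\<in>UNIV. selector \<alpha> \<beta> s * lie_bracket C (\<lambda>i. x (i, \<alpha>)) (\<lambda>j. y (j, \<beta>)) k))
          \<in> derived_series C (Suc n)"
      by (rule subsp_sum[OF derived_subsp finite_UNIV, where v="\<lambda>\<alpha> k. \<Sum>\<beta>\<in>UNIV. selector \<alpha> \<beta> s * lie_bracket C (\<lambda>i. x (i, \<alpha>)) (\<lambda>j. y (j, \<beta>)) k"], rule inner)
    then show ?thesis using xy(1) by (simp add: bracket_slice)
  qed
  have "(\<lambda>i. \<Sum>a\<in>t. r a * a (i, s)) \<in> derived_series C (Suc n)"
    by (rule subsp_sum[OF derived_subsp h(1)]) (rule sl)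
  then show ?case using h(3) by simp
qed

theorem theorem1:
  fixes C :: "'i::finite \<Rightarrow> 'i \<Rightarrow> 'i \<Rightarrow> 'k::field"
  assumes "is_lie_algebra C"
    and "solvable_lie C"
  shows "solvable_lie (expanded_consts C :: ('i \<times> 's::{finite,ab_semigroup_mult}) \<Rightarrow> _)"
proof -
  let ?E = "expanded_consts C :: ('i \<times> 's) \<Rightarrow> _"
  from assms(2) obtain n where n: "derived_series C n = {\<lambda>_. 0}"
    unfolding solvable_lie_def by blast
  have "derived_series ?E n = {\<lambda>_. 0}"
  proof
    show "derived_series ?E n \<subseteq> {\<lambda>_. 0}"
    proof
      fix v assume "v \<in> derived_series ?E n"
      then have "(\<lambda>i. v (i, s)) = (\<lambda>_. 0)" for s using main_incl n by blast
      then have "v = (\<lambda>_. 0)" by (auto simp: fun_eq_iff dest: fun_cong)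
      then show "v \<in> {\<lambda>_. 0}" by simp
    qed
    show "{\<lambda>_. 0} \<subseteq> derived_series ?E n"
      using derived_subsp[of ?E n] by (simp add: subsp_def)
  qed
  then show ?thesis unfolding solvable_lie_def by blast
qed

end
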